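(* Let $q=p^m$ with $p$ an odd prime, $m\ge1$, and $q\equiv 5\pmod 6$. For $b\in\mathbb{F}_{q^2}$ let $\delta(b)=\#\{u\in\mathbb{F}_{q^2}:\ 2u^{q+1}+u^2=b\}$. Then there are exactly $q-1$ elements $b\in\mathbb{F}_{q^2}^*$ with $\delta(b)=2$.
   Context: $\delta(b)$ equals $\delta_f(1,b+\tfrac14)$ for $f(x)=x^{q+2}$, where $\delta_f(a,b)=\#\{x\in\mathbb{F}_{q^2}: f(x+a)-f(x)=b\}$. *)

theory Defs
  imports "HOL-Computational_Algebra.Primes"
begin

text \<open>The finite field F_{q^2} is modelled as an arbitrary finite field type 'a
with CARD('a) = q^2; such a field is unique up to isomorphism.\<close>

definition delta :: "nat \<Rightarrow> 'a::{finite,field} \<Rightarrow> nat" where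
  "delta q b = card {u::'a. 2 * u ^ (q + 1) + u ^ 2 = b}"

end

theory Submission imports Defs "HOL-Computational_Algebra.Polynomial" begin

lemma roots_unity_bound:
  fixes k :: nat assumes "k \<ge> 1"
  shows "card {x::'a::idom. x^k = 1} \<le> k"
proof -
  let ?P = "monom (1::'a) k - 1"
  have ck: "coeff ?P k = 1" using assms by (simp add: coeff_monom)
  have nz: "?P \<noteq> 0"
  proof
    assume "?P = 0" with ck show False by simp
  qed
  have "degree ?P \<le> k"
    by (intro degree_diff_le) (simp_all add: degree_monom_le)
  moreover have "degree ?P \<ge> k" using ck by (intro le_degree) simp
  ultimately have deg: "degree ?P = k" by simp
  have "{x. x^k = 1} = {x. poly ?P x = 0}" by (simp add: poly_monom)
  thus ?thesis using card_poly_roots_bound[OF nz] deg by simp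
qed

lemma of_nat_card_zero: "of_nat (card (UNIV :: 'a::{finite,ring_1} set)) = (0::'a)"
proof -
  have "(\<Sum>y\<in>(UNIV::'a set). y) = (\<Sum>y\<in>UNIV. y + 1)"
    by (rule sum.reindex_bij_witness[of _ "\<lambda>y. y + 1" "\<lambda>y. y - 1"]) auto
  also have "\<dots> = (\<Sum>y\<in>UNIV. y) + of_nat (card (UNIV :: 'a set))"
    by (simp add: sum.distrib)
  finally show ?thesis by simp
qed

lemma pow_card_same:
  fixes x :: "'a :: {finite,field}"
  shows   "x ^ card (UNIV :: 'a set) = x"
proof (cases "x = 0")
  case False
  have "x * (\<Prod>y\<in>UNIV-{0}. x * y) = x * x ^ (card (UNIV :: 'a set) - 1) * \<Prod>(UNIV-{0})"
    by (simp add: prod.distrib mult_ac)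
  also have "x * x ^ (card (UNIV :: 'a set) - 1) = x ^ Suc (card (UNIV :: 'a set) - 1)"
    by (subst power_Suc) auto
  also have "Suc (card (UNIV :: 'a set) - 1) = card (UNIV :: 'a set)"
    using finite_UNIV_card_ge_0[where ?'a = 'a] by simp
  also have "(\<Prod>y\<in>UNIV-{0}. x * y) = (\<Prod>y\<in>UNIV-{0}. y)"
    by (rule prod.reindex_bij_witness[of _ "\<lambda>y. y / x" "\<lambda>y. x * y"]) (use False in auto)
  finally show ?thesis
    by simp
qed (use finite_UNIV_card_ge_0[where ?'a = 'a] in auto)

lemma four_nz: "(2::'a::field) \<noteq> 0 \<Longrightarrow> (4::'a) \<noteq> 0"
proof -
  assume h: "(2::'a) \<noteq> 0"
  have a: "(2::'a)*2 \<noteq> 0" by (rule no_zero_divisors[OF h h])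
  thus ?thesis by simp
qed

lemma alg1:
  fixes a b x y :: "'a::field"
  assumes "(2::'a)\<noteq>0" "(3::'a)\<noteq>0" "a\<noteq>0" "a^2+a*b+b^2=0"
    "x^2+2*x*y = a^2+2*a*b" "y^2+2*x*y = b^2+2*a*b"
  shows "x = a \<or> x = -a"
proof -
  have h1: "(x+y)*(x-y) = (a+b)*(a-b)"
  proof -
    have "(x+y)*(x-y) = (x^2+2*x*y) - (y^2+2*x*y)" by (simp add: algebra_simps power2_eq_square)
    also have "\<dots> = (a^2+2*a*b) - (b^2+2*a*b)" using assms(5,6) by simp
    also have "\<dots> = (a+b)*(a-b)" by (simp add: algebra_simps power2_eq_square)
    finally show ?thesis .
  qed
  have h2: "3*(x+y)^2 - (x-y)^2 = 3*(a+b)^2 - (a-b)^2" using assms(5,6) by algebra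
  have h3: "(a-b)^2 = -3*(a+b)^2" using assms(4) by algebra
  have h4: "3*((x+y)^2)^2 - (3*(a+b)^2 - (a-b)^2)*(x+y)^2 - (a+b)^2*(a-b)^2 = 0"
  proof -
    have "3*((x+y)^2)^2 - (3*(a+b)^2 - (a-b)^2)*(x+y)^2 - (a+b)^2*(a-b)^2
       = ((x+y)*(x-y))^2 - ((a+b)*(a-b))^2" unfolding h2[symmetric] by algebra
    thus ?thesis using h1 by simp
  qed
  have "3*((x+y)^2 - (a+b)^2)^2 = 0" using h4 unfolding h3 by algebra
  hence sq: "(x+y)^2 = (a+b)^2" using assms(2) by simp
  have tu: "a + b \<noteq> 0"
  proof
    assume "a + b = 0" hence "b = -a" by (simp add: add_eq_0_iff)
    thus False using assms(3,4) by (simp add: power2_eq_square)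
  qed
  have prod: "(x+y)*(x-y) = (a+b)*(a-b)" using assms(5,6) by algebra
  from sq have "x+y = a+b \<or> x+y = -(a+b)" by (simp add: power2_eq_iff)
  thus ?thesis
  proof
    assume h: "x+y = a+b"
    with prod tu have "x-y = a-b" by simp
    with h have "2*x = 2*a" by algebra
    thus ?thesis using assms(1) by simp
  next
    assume h: "x+y = -(a+b)"
    have "(a+b)*(-(x-y)) = (-(a+b))*(x-y)" by (simp only: mult_minus_right mult_minus_left)
    also have "\<dots> = (x+y)*(x-y)" by (simp only: h)
    also have "\<dots> = (a+b)*(a-b)" by (rule prod)
    finally have "(a+b)*(-(x-y)) = (a+b)*(a-b)" .
    hence "-(x-y) = a-b" using mult_left_cancel[OF tu] by blast
    with h have "2*x = 2*(-a)" by algebra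
    hence "x = -a" by (rule mult_left_cancel[OF assms(1), THEN iffD1])
    thus ?thesis by simp
  qed
qed

lemma alg2:
  fixes a b r :: "'a::field"
  assumes "(2::'a)\<noteq>0" "r^2 = -3" "(3::'a) \<noteq> 0"
  shows "(((a-b)/r + (a+b)*r)/2)^2 + 2*(((a-b)/r + (a+b)*r)/2)*(((a-b)/r - (a+b)*r)/2)
     = a^2 + 2*a*b"
proof -
  have r: "r \<noteq> 0" using assms by auto
  define X where "X = (a-b)/r"
  have X: "X*r = a-b" using r unfolding X_def by simp
  define h where "h = ((a-b)/r + (a+b)*r)/2"
  define k where "k = ((a-b)/r - (a+b)*r)/2"
  have h2: "2*h = X + (a+b)*r" unfolding h_def X_def using assms(1) by simp
  have k2: "2*k = X - (a+b)*r" unfolding k_def X_def using assms(1) by simp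
  have "4*(h^2 + 2*h*k) = 4*(a^2+2*a*b)" using h2 k2 X assms(2) by algebra
  hence "h^2 + 2*h*k = a^2+2*a*b"
    by (rule mult_left_cancel[OF four_nz[OF assms(1)], THEN iffD1])
  thus ?thesis unfolding h_def k_def .
qed

lemma alg3:
  fixes a b r :: "'a::field"
  assumes "r^2 = -3" "(2::'a) \<noteq> 0" "(3::'a) \<noteq> 0" "(a-b)/r = a+b \<or> (a-b)/r = -(a+b)"
  shows "a^2+a*b+b^2 = 0"
proof -
  have r: "r \<noteq> 0" using assms by auto
  from assms(4) have "((a-b)/r)^2 = (a+b)^2" by (metis power2_minus)
  hence "(a-b)^2 = (a+b)^2 * r^2" using r by (simp add: field_simps)
  hence "(a-b)^2 = -3*(a+b)^2" using assms(1) by simp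
  hence "4*(a^2+a*b+b^2) = 0" by algebra
  moreover have "(4::'a) \<noteq> 0" using four_nz[OF assms(2)] .
  ultimately show ?thesis using mult_eq_0_iff by blast
qed


lemma pow_fiber_card:
  fixes k :: nat and y :: "'a::{finite,field}"
  assumes "k \<ge> 1" "y \<in> (\<lambda>x. x^k) ` {x::'a. x\<noteq>0}"
  shows "card {x::'a. x \<noteq> 0 \<and> x^k = y} = card {x::'a. x^k = 1}"
proof -
  obtain x0 where x0: "x0 \<noteq> 0" "x0^k = y" using assms by auto
  have y0: "y \<noteq> 0" using x0(1) x0(2)[symmetric] by simp
  have "bij_betw (\<lambda>z. x0*z) {x. x^k = 1} {x. x \<noteq> 0 \<and> x^k = y}"
  proof (rule bij_betw_byWitness[where f'="\<lambda>z. z/x0"])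
    show "\<forall>a\<in>{x. x ^ k = 1}. x0 * a / x0 = a" using x0 by simp
    show "\<forall>a'\<in>{x. x \<noteq> 0 \<and> x ^ k = y}. x0 * (a' / x0) = a'" using x0 by simp
    show "(*) x0 ` {x. x ^ k = 1} \<subseteq> {x. x \<noteq> 0 \<and> x ^ k = y}"
    proof
      fix z assume "z \<in> (*) x0 ` {x. x ^ k = 1}"
      then obtain w where w: "w^k = 1" "z = x0*w" by auto
      have "w \<noteq> 0"
      proof
        assume "w = 0" with w(1) assms(1) show False by (simp add: power_0_left)
      qed
      thus "z \<in> {x. x \<noteq> 0 \<and> x ^ k = y}" using w x0 by (simp add: power_mult_distrib)
    qed
    show "(\<lambda>z. z / x0) ` {x. x \<noteq> 0 \<and> x ^ k = y} \<subseteq> {x. x ^ k = 1}"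
      using x0 y0 by (auto simp: power_divide)
  qed
  from bij_betw_same_card[OF this] show ?thesis by (rule sym)
qed

lemma pow_card_prod:
  fixes k::nat assumes "k\<ge>1"
  shows "card {x::'a::{finite,field}. x \<noteq> 0} = card ((\<lambda>x. x^k) ` {x::'a. x\<noteq>0}) * card {x::'a. x^k = 1}"
proof -
  let ?F = "{x::'a. x\<noteq>0}" let ?g = "\<lambda>x::'a. x^k"
  have "card ?F = (\<Sum>y\<in>?g`?F. card {x\<in>?F. ?g x = y})"
    using sum.group[of ?F "?g`?F" ?g "\<lambda>_. 1::nat"] by simp
  also have "\<dots> = (\<Sum>y\<in>?g`?F. card {x::'a. x^k=1})"
    by (rule sum.cong) (use pow_fiber_card[OF assms] in auto)
  also have "\<dots> = card (?g`?F) * card {x::'a. x^k=1}" by simp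
  finally show ?thesis .
qed

lemma nat_prod_eq:
  fixes a b A B :: nat
  assumes "a \<le> A" "b \<le> B" "a*b = A*B" "A > 0" "B > 0"
  shows "a = A \<and> b = B"
proof (rule ccontr)
  assume "\<not> (a = A \<and> b = B)"
  hence "a < A \<or> b < B" using assms le_neq_implies_less by blast
  thus False
  proof
    assume "a < A"
    have "a*b \<le> a*B" using assms(2) by (rule mult_le_mono2)
    also have "\<dots> < A*B" using \<open>a < A\<close> assms by simp
    finally show False using assms by simp
  next
    assume "b < B"
    have "a*b \<le> A*b" using assms(1) by (rule mult_le_mono1)
    also have "\<dots> < A*B" using \<open>b < B\<close> assms by simp
    finally show False using assms by simp
  qed
qed


lemma half_sum: fixes X Y :: "'a::field" shows "(2::'a) \<noteq> 0 \<Longrightarrow> (X+Y)/2 + (X-Y)/2 = X"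
proof -
  assume h: "(2::'a) \<noteq> 0"
  have "(X+Y)/2 + (X-Y)/2 = ((X+Y)+(X-Y))/2" by (rule add_divide_distrib[symmetric])
  also have "\<dots> = (2*X)/2"
  proof -
    have "(X+Y)+(X-Y) = 2*X" by (simp add: algebra_simps)
    thus ?thesis by (simp only:)
  qed
  also have "\<dots> = X" using h by simp
  finally show ?thesis .
qed

lemma cube_fact: "(z-1)*(z^2+z+1) = z^3 - (1::'a::comm_ring_1)"
  by (simp add: algebra_simps power2_eq_square power3_eq_cube)

locale fq2 =
  fixes q :: nat and c :: "'a::{finite,field} \<Rightarrow> 'a"
  assumes c_def: "c = (\<lambda>x. x ^ q)"
  and cardq: "card (UNIV::'a set) = q^2"
  and frob: "\<And>x y::'a. (x+y)^q = x^q + y^q"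
  and qmod: "q mod 6 = 5"
  and two: "(2::'a) \<noteq> 0" and three: "(3::'a) \<noteq> 0"
begin

lemma q_ge: "q \<ge> 5" using qmod by presburger
lemma q_odd: "odd q" using qmod by presburger
lemma q_mod3: "q mod 3 = 2" using qmod by presburger

lemma c_add: "c (x+y) = c x + c y" unfolding c_def by (simp add: frob)
lemma c_mult: "c (x*y) = c x * c y" unfolding c_def by (simp add: power_mult_distrib)
lemma c_neg: "c (-x) = - c x" unfolding c_def using q_odd by simp
lemma c_diff: "c (x-y) = c x - c y"
  using c_add[of x "-y"] c_neg[of y] by simp
lemma c_one: "c 1 = 1" unfolding c_def by simp
lemma c_two: "c 2 = 2" using c_add[of 1 1] c_one by (simp add: one_add_one)
lemma c_div: "c (x/y) = c x / c y" unfolding c_def by (simp add: power_divide)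
lemma cc: "c (c x) = x"
proof -
  have "c (c x) = x ^ (q^2)" unfolding c_def by (simp add: power_mult[symmetric] power2_eq_square)
  also have "\<dots> = x" using pow_card_same[of x] cardq by simp
  finally show ?thesis .
qed
lemma pow_nz: "x \<noteq> 0 \<Longrightarrow> x^(q^2 - 1) = (1::'a)"
proof -
  assume x: "x \<noteq> 0"
  have q2: "q^2 = Suc (q^2 - 1)" using q_ge by (simp add: power2_eq_square)
  have "x * x^(q^2-1) = x^(Suc (q^2-1))" by simp
  also have "\<dots> = x^(q^2)" using q2 by simp
  also have "\<dots> = x * 1" using pow_card_same[of x] cardq by simp
  finally have "x * x^(q^2-1) = x * 1" .
  thus ?thesis using x by simp
qed

lemma cardF: "card {x::'a. x \<noteq> 0} = q^2 - 1"
proof -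
  have "{x::'a. x \<noteq> 0} = UNIV - {0}" by auto
  thus ?thesis using cardq by (simp add: card_Diff_singleton)
qed

lemma zeta_ex: "\<exists>z::'a. z^2 + z + 1 = 0"
proof (rule ccontr)
  assume no: "\<not> (\<exists>z::'a. z^2 + z + 1 = 0)"
  let ?F = "{x::'a. x \<noteq> 0}"
  have inj: "inj_on (\<lambda>x. x^3) ?F"
  proof (rule inj_onI)
    fix x y :: 'a assume xy: "x \<in> ?F" "y \<in> ?F" "x^3 = y^3"
    let ?z = "x/y"
    have "?z^3 = 1" using xy by (simp add: power_divide)
    hence "(?z - 1) * (?z^2 + ?z + 1) = 0" by (simp only: cube_fact) simp
    hence "?z = 1" using no by auto
    thus "x = y" using xy by simp
  qed
  have sub: "(\<lambda>x. x^3) ` ?F \<subseteq> ?F" by auto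
  have img: "(\<lambda>x. x^3) ` ?F = ?F" by (rule endo_inj_surj[OF _ sub inj]) simp
  have d3: "3 dvd q^2 - 1"
  proof -
    have "q^2 mod 3 = ((q mod 3)^2) mod 3" by (simp add: power_mod)
    hence "q^2 mod 3 = 1" using q_mod3 by simp
    moreover have "\<forall>Q::nat. Q mod 3 = 1 \<longrightarrow> 3 dvd Q - 1" by presburger
    ultimately show ?thesis by blast
  qed
  define e where "e = (q^2 - 1) div 3"
  have e3: "q^2 - 1 = 3 * e" using d3 unfolding e_def by simp
  have "5*5 \<le> q*q" using q_ge mult_le_mono by blast
  hence q2: "q^2 \<ge> 25" by (simp add: power2_eq_square)
  have e1: "e \<ge> 1" using e3 q2 by linarith
  have "?F \<subseteq> {x. x^e = 1}"
  proof
    fix x assume "x \<in> ?F"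
    hence "x \<in> (\<lambda>x. x^3) ` ?F" using img by simp
    then obtain y where y: "y \<in> ?F" "x = y^3" by blast
    have "x^e = y^(q^2-1)" using y e3 by (simp add: power_mult)
    also have "\<dots> = 1" using y pow_nz by simp
    finally show "x \<in> {x. x^e = 1}" by simp
  qed
  hence "card ?F \<le> card {x::'a. x^e = 1}" by (intro card_mono) auto
  also have "\<dots> \<le> e" using roots_unity_bound[OF e1] .
  finally show False using cardF e3 e1 by linarith
qed


lemma qq1: "(q-1)*(q+1) = q^2 - 1"
  using q_ge by (cases q) (auto simp: power2_eq_square algebra_simps)

lemma K_and_image:
  "card {x::'a. x^(q-1) = 1} = q - 1 \<and> (\<lambda>x. x^(q-1)) ` {x::'a. x \<noteq> 0} = {y. y^(q+1) = 1}"
proof -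
  let ?I = "(\<lambda>x. x^(q-1)) ` {x::'a. x \<noteq> 0}" and ?M = "{y::'a. y^(q+1) = 1}"
    and ?K = "{x::'a. x^(q-1) = 1}"
  have IM: "?I \<subseteq> ?M"
  proof
    fix y assume "y \<in> ?I"
    then obtain x where x: "x \<noteq> 0" "y = x^(q-1)" by auto
    have "y^(q+1) = x^((q-1)*(q+1))" unfolding x(2) by (simp only: power_mult)
    also have "\<dots> = 1" using qq1 pow_nz[OF x(1)] by simp
    finally show "y \<in> ?M" by simp
  qed
  have q1: "q - 1 \<ge> 1" using q_ge by simp
  have cM: "card ?M \<le> q+1" using roots_unity_bound[of "q+1"] by simp
  have cI: "card ?I \<le> card ?M" using IM by (intro card_mono) auto
  have cK: "card ?K \<le> q-1" using roots_unity_bound[OF q1] .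
  have prod: "card ?I * card ?K = (q+1)*(q-1)"
    using pow_card_prod[OF q1, where 'a='a] cardF qq1 by (simp add: mult.commute)
  have "card ?I = q+1 \<and> card ?K = q-1"
    by (rule nat_prod_eq) (use cM cI cK prod q_ge in auto)
  moreover have "?I = ?M"
  proof -
    have "card ?I = card ?M" using cM cI calculation by linarith
    thus ?thesis using card_subset_eq[OF _ IM] by simp
  qed
  ultimately show ?thesis by simp
qed

lemma fiber_q1:
  assumes "z^(q+1) = (1::'a)"
  shows "card {x::'a. x \<noteq> 0 \<and> x^(q-1) = z} = q - 1"
proof -
  have q1: "q - 1 \<ge> 1" using q_ge by simp
  have "z \<in> (\<lambda>x. x^(q-1)) ` {x::'a. x \<noteq> 0}" using K_and_image assms by simp
  from pow_fiber_card[OF q1 this] K_and_image show ?thesis by simp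
qed

definition zeta :: 'a where "zeta = (SOME z. z^2 + z + 1 = 0)"

lemma zeta: "zeta^2 + zeta + 1 = 0"
  unfolding zeta_def using zeta_ex by (rule someI_ex)

lemma zeta3: "zeta^3 = 1"
  using cube_fact[of zeta] zeta by simp

lemma zeta_nz: "zeta \<noteq> 0" using zeta by auto

lemma c_zeta: "c zeta = zeta^2"
proof -
  define k where "k = q div 3"
  have k: "q = 3*k + 2" using mod_div_mult_eq[of q 3] q_mod3 unfolding k_def by linarith
  have "c zeta = zeta^(3*k) * zeta^2" unfolding c_def k by (rule power_add)
  also have "\<dots> = (zeta^3)^k * zeta^2" by (simp only: power_mult)
  also have "\<dots> = zeta^2" using zeta3 by simp
  finally show ?thesis .
qed

lemma zeta_q1: "zeta^(q+1) = 1" "(zeta^2)^(q+1) = 1"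
proof -
  have "3 dvd q + 1" using q_mod3 by presburger
  then obtain k where k: "q + 1 = 3*k" by (auto elim: dvdE)
  show "zeta^(q+1) = 1" unfolding k by (simp add: power_mult zeta3)
  have "(zeta^2)^(q+1) = (zeta^(q+1))^2" by (simp only: power_mult[symmetric] mult.commute)
  thus "(zeta^2)^(q+1) = 1" using \<open>zeta^(q+1) = 1\<close> by simp
qed

lemma zeta_ne: "zeta \<noteq> zeta^2"
proof
  assume h: "zeta = zeta^2"
  hence "zeta * (zeta - 1) = 0" by (simp add: algebra_simps power2_eq_square)
  hence "zeta = 1" using zeta_nz by simp
  thus False using zeta three by simp
qed

definition C :: "'a set" where "C = {u. u \<noteq> 0 \<and> u^2 + u * c u + (c u)^2 = 0}"

lemma crit_factor: "u^2 + u * w + w^2 = (w - zeta*u) * (w - zeta^2*u)"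
proof -
  have "(w - zeta*u) * (w - zeta^2*u) = w^2 - (zeta^2+zeta)*u*w + zeta^3*u^2"
    by (simp add: algebra_simps power2_eq_square power3_eq_cube)
  also have "\<dots> = w^2 - (-1)*u*w + 1*u^2"
  proof -
    have z1: "zeta^2 + zeta = -1" by (simp only: eq_neg_iff_add_eq_0) (rule zeta)
    show ?thesis by (simp only: z1 zeta3)
  qed
  finally show ?thesis by (simp add: algebra_simps)
qed

lemma C_split: "C = {x. x \<noteq> 0 \<and> x^(q-1) = zeta} \<union> {x. x \<noteq> 0 \<and> x^(q-1) = zeta^2}"
proof -
  have cu: "c u = u^(q-1) * u" for u
  proof -
    have "c u = u^(Suc (q-1))" unfolding c_def using q_ge by simp
    also have "\<dots> = u^(q-1) * u" by (rule power_Suc2)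
    finally show ?thesis .
  qed
  have "u \<in> C \<longleftrightarrow> u \<noteq> 0 \<and> (u^(q-1) = zeta \<or> u^(q-1) = zeta^2)" for u
  proof (cases "u = 0")
    case False
    have "u \<in> C \<longleftrightarrow> (c u - zeta*u) * (c u - zeta^2*u) = 0"
      using False unfolding C_def crit_factor by simp
    also have "\<dots> \<longleftrightarrow> u^(q-1) = zeta \<or> u^(q-1) = zeta^2"
      using False by (simp add: cu)
    finally show ?thesis using False by simp
  qed (simp add: C_def)
  thus ?thesis by auto
qed

lemma card_C: "card C = 2*(q-1)"
proof -
  have "card C = card {x::'a. x \<noteq> 0 \<and> x^(q-1) = zeta} + card {x. x \<noteq> 0 \<and> x^(q-1) = zeta^2}"
    unfolding C_split by (rule card_Un_disjoint) (use zeta_ne in auto)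
  thus ?thesis using fiber_q1 zeta_q1 by simp
qed


definition phi :: "'a \<Rightarrow> 'a" where "phi u = u^2 + 2*u*c u"

lemma delta_phi: "delta q (b::'a) = card {u. phi u = b}"
  unfolding delta_def phi_def unfolding c_def by (simp add: add.commute mult.assoc)

lemma c_phi: "c (phi u) = (c u)^2 + 2*(c u)*u"
  unfolding phi_def by (simp add: c_add c_mult c_two cc power2_eq_square)

lemma c_zero: "c 0 = 0" unfolding c_def using q_ge by simp

lemma phi0: "phi 0 = 0" by (simp add: phi_def c_zero)

lemma u_ne: "(u::'a) \<noteq> 0 \<Longrightarrow> u \<noteq> -u"
proof
  assume "u \<noteq> 0" "u = -u"
  hence uu: "u + u = 0" using eq_neg_iff_add_eq_0 by blast
  have "2*u = u + u" by (rule mult_2)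
  also have "\<dots> = 0" by (rule uu)
  finally have "2*u = 0" .
  thus False using two \<open>u \<noteq> 0\<close> by simp
qed

lemma C_nz: "u \<in> C \<Longrightarrow> u \<noteq> 0" by (simp add: C_def)

lemma C_neg: "u \<in> C \<Longrightarrow> -u \<in> C" by (simp add: C_def c_neg)

lemma fiber_C: assumes "u \<in> C" shows "{v. phi v = phi u} = {u, -u}"
proof
  show "{v. phi v = phi u} \<subseteq> {u, -u}"
  proof
    fix v assume "v \<in> {v. phi v = phi u}"
    hence e: "phi v = phi u" by simp
    hence e2: "c (phi v) = c (phi u)" by simp
    have u: "u \<noteq> 0" "u^2 + u*c u + (c u)^2 = 0" using assms C_def by auto
    have "v = u \<or> v = -u"
    proof (rule alg1[OF two three u(1) u(2)])
      show "v^2 + 2*v*c v = u^2 + 2*u*c u" using e unfolding phi_def .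
      show "(c v)^2 + 2*v*c v = (c u)^2 + 2*u*c u" using e2 unfolding c_phi by (simp add: mult_ac)
    qed
    thus "v \<in> {u,-u}" by simp
  qed
  show "{u,-u} \<subseteq> {v. phi v = phi u}" by (simp add: phi_def c_neg)
qed

lemma delta_C: assumes "u \<in> C" shows "delta q (phi u) = 2"
proof -
  have "u \<noteq> -u" using u_ne assms C_def by auto
  thus ?thesis using fiber_C[OF assms] delta_phi by simp
qed

lemma noncrit: assumes "u \<noteq> 0" "u \<notin> C" shows "delta q (phi u) \<noteq> 2"
proof -
  define r where "r = 2*zeta + 1"
  have "r^2 = 4*(zeta^2+zeta+1) - 3" unfolding r_def by (simp add: algebra_simps power2_eq_square)
  hence r2: "r^2 = -3" using zeta by simp
  have r0: "r \<noteq> 0" using r2 three by auto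
  have z2: "zeta^2 = -zeta - 1" using zeta by (simp add: eq_neg_iff_add_eq_0 algebra_simps)
  have "c r = 2*zeta^2 + 1" by (simp add: r_def c_add c_mult c_two c_one c_zeta)
  hence cr: "c r = -r" unfolding z2 r_def by (simp add: algebra_simps)
  define u' where "u' = ((u - c u)/r + (u + c u)*r)/2"
  have "c u' = ((c u - u)/(-r) + (c u + u)*(-r))/2"
    unfolding u'_def by (simp add: c_div c_add c_diff c_mult c_two cc cr)
  also have "\<dots> = ((u - c u)/r - (u + c u)*r)/2"
  proof -
    have a1: "(c u - u)/(-r) = (u - c u)/r" by (simp only: divide_minus_right minus_divide_left minus_diff_eq)
    have a2: "(c u + u)*(-r) = -((u + c u)*r)" by (simp add: add.commute)
    show ?thesis by (simp only: a1 a2) simp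
  qed
  finally have cu': "c u' = ((u - c u)/r - (u + c u)*r)/2" .
  have ph: "phi u' = phi u"
    unfolding phi_def unfolding cu' unfolding u'_def by (rule alg2[OF two r2 three])
  have sum': "u' + c u' = (u - c u)/r"
    unfolding cu' unfolding u'_def by (rule half_sum[OF two])
  have crit_no: "\<not> (u^2 + u*c u + (c u)^2 = 0)" using assms unfolding C_def by simp
  have ne1: "u' \<noteq> u"
  proof
    assume h: "u' = u"
    have "(u - c u)/r = u' + c u'" using sum' by (rule sym)
    also have "\<dots> = u + c u" using h by simp
    finally have "(u - c u)/r = u + c u" .
    thus False using alg3[OF r2 two three] crit_no by blast
  qed
  have ne2: "u' \<noteq> -u"
  proof
    assume h: "u' = -u"
    have "(u - c u)/r = u' + c u'" using sum' by (rule sym)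
    also have "\<dots> = -u + - c u" using h by (simp add: c_neg)
    also have "\<dots> = -(u + c u)" by simp
    finally have "(u - c u)/r = -(u + c u)" .
    thus False using alg3[OF r2 two three] crit_no by blast
  qed
  have phn: "phi (-u) = phi u" by (simp add: phi_def c_neg)
  have sub: "{u, -u, u'} \<subseteq> {v. phi v = phi u}" using ph phn by blast
  have "card {u, -u, u'} = 3" using ne1 ne2 u_ne[OF assms(1)] by auto
  hence "3 \<le> card {v. phi v = phi u}" using card_mono[OF _ sub] by simp
  thus ?thesis using delta_phi by simp
qed

lemma main: "card {b::'a. b \<noteq> 0 \<and> delta q b = 2} = q - 1"
proof -
  have S: "{b. b \<noteq> 0 \<and> delta q b = 2} = phi ` C"
  proof (intro equalityI subsetI)
    fix b :: 'a assume "b \<in> {b. b \<noteq> 0 \<and> delta q b = 2}"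
    hence b: "b \<noteq> 0" "card {u. phi u = b} = 2" by (auto simp: delta_phi)
    have "{u. phi u = b} \<noteq> {}"
    proof
      assume "{u. phi u = b} = {}" with b(2) show False by simp
    qed
    then obtain u where u: "phi u = b" by auto
    have "u \<noteq> 0" using u b phi0 by auto
    show "b \<in> phi ` C"
    proof (cases "u \<in> C")
      case True thus ?thesis using u by auto
    next
      case False with noncrit[OF \<open>u\<noteq>0\<close> False] u b delta_phi show ?thesis by simp
    qed
  next
    fix b :: 'a assume "b \<in> phi ` C"
    then obtain u where u: "u \<in> C" "b = phi u" by auto
    have "b \<noteq> 0"
    proof
      assume "b = 0"
      hence "0 \<in> {v. phi v = phi u}" using u phi0 by simp
      hence "0 \<in> {u, -u}" using fiber_C[OF u(1)] by simp
      hence "u = 0" by auto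
      thus False using C_nz[OF u(1)] by simp
    qed
    thus "b \<in> {b. b \<noteq> 0 \<and> delta q b = 2}" using delta_C u by simp
  qed
  have "card C = (\<Sum>b\<in>phi`C. card {x\<in>C. phi x = b})"
    using sum.group[of C "phi`C" phi "\<lambda>_. 1::nat"] by simp
  also have "\<dots> = (\<Sum>b\<in>phi`C. 2)"
  proof (rule sum.cong[OF refl])
    fix b assume "b \<in> phi ` C"
    then obtain u where u: "u \<in> C" "b = phi u" by auto
    have "{x\<in>C. phi x = b} = {u, -u}"
    proof
      show "{x\<in>C. phi x = b} \<subseteq> {u, -u}" using fiber_C[OF u(1)] u(2) by blast
      show "{u, -u} \<subseteq> {x\<in>C. phi x = b}" using fiber_C[OF u(1)] u C_neg[OF u(1)] by blast
    qed
    moreover have "u \<noteq> -u" using u_ne[OF C_nz[OF u(1)]] .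
    ultimately show "card {x\<in>C. phi x = b} = 2" by simp
  qed
  also have "\<dots> = 2 * card (phi ` C)" by simp
  finally show ?thesis using S card_C by simp
qed

end

theorem proposition6:
  fixes p m q :: nat
  assumes "prime p" and "odd p" and "m \<ge> 1" and "q = p ^ m"
    and "q mod 6 = 5"
    and "card (UNIV :: 'a set) = q ^ 2"
  shows "card {b::'a::{finite,field}. b \<noteq> 0 \<and> delta q b = 2} = q - 1"
proof -
  have fin: "finite (UNIV::'a set)" by simp
  have cpos: "CHAR('a) > 0" by (rule finite_imp_CHAR_pos[OF fin])
  have cprime: "prime CHAR('a)" by (rule prime_CHAR_semidom[OF cpos])
  have "of_nat (card (UNIV::'a set)) = (0::'a)" by (rule of_nat_card_zero)
  hence "of_nat (q^2) = (0::'a)" using assms(6) by simp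
  hence "CHAR('a) dvd q^2" by (rule of_nat_eq_0_iff_char_dvd[THEN iffD1])
  moreover have "q^2 = p^(m*2)" using assms(4) by (simp add: power_mult)
  ultimately have "CHAR('a) dvd p^(m*2)" by simp
  hence "CHAR('a) dvd p" using cprime prime_dvd_power by blast
  hence ch: "CHAR('a) = p" using cprime assms(1) primes_dvd_imp_eq by blast
  have frob: "(x+y)^q = x^q + y^q" for x y :: 'a
    by (rule freshmans_dream') (simp_all add: ch assms(1,4))
  have p3: "p \<ge> 3"
  proof -
    have "p \<ge> 2" using assms(1) by (simp add: prime_ge_2_nat)
    moreover have "p \<noteq> 2" using assms(2) by auto
    ultimately show ?thesis by simp
  qed
  have two: "(2::'a) \<noteq> 0"
  proof
    assume "(2::'a) = 0"
    hence "of_nat 2 = (0::'a)" by simp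
    hence "CHAR('a) dvd 2" by (rule of_nat_eq_0_iff_char_dvd[THEN iffD1])
    hence "p dvd 2" using ch by simp
    hence "p \<le> 2" by (simp add: dvd_imp_le)
    thus False using p3 by simp
  qed
  have three: "(3::'a) \<noteq> 0"
  proof
    assume "(3::'a) = 0"
    hence "of_nat 3 = (0::'a)" by simp
    hence "CHAR('a) dvd 3" by (rule of_nat_eq_0_iff_char_dvd[THEN iffD1])
    hence "p dvd 3" using ch by simp
    hence "p \<le> 3" by (simp add: dvd_imp_le)
    hence "p = 3" using p3 by simp
    hence "3 dvd q" using assms(3,4) by (simp add: dvd_power)
    thus False using assms(5) by presburger
  qed
  interpret F: fq2 q "\<lambda>x::'a. x^q"
    by unfold_locales (simp_all add: assms(5,6) frob two three)
  show ?thesis by (rule F.main)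
qed

end
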